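(* Let $p,q,k$ be nonnegative integers with $k\le2\min\{p,q\}$, let $Q$ be a binary quadratic form with discriminant $\Delta$, and let $\mathcal{T}=(Q^p,Q^q)_k$. If $k$ is odd then $\mathcal{T}=0$. If $k=2m$ is even then $$\mathcal{T}=Q^{p+q-2m}\,(-\Delta)^m\,\mathcal{N}^{\rm II}_{p,q,m},\qquad \mathcal{N}^{\rm II}_{p,q,m}=\frac{p!\,q!\,(2m)!\,(p+q-m)!\,(2p-2m)!\,(2q-2m)!}{(2p)!\,(2q)!\,m!\,(p+q-2m)!\,(p-m)!\,(q-m)!}.$$
   Context: For binary forms $A,B$ in $(x_0,x_1)$ of degrees $a,b$ and $k\ge0$, $(A,B)_k=\frac{(a-k)!(b-k)!}{a!\,b!}\bigl[\Omega^kA(x_0,x_1)B(y_0,y_1)\bigr]_{\underline{y}:=\underline{x}}$ with $\Omega=\frac{\partial^2}{\partial x_0\partial y_1}-\frac{\partial^2}{\partial x_1\partial y_0}$. The discriminant is normalized so that for $Q=\lambda x_0^2+\mu x_0x_1+\nu x_1^2$ one has $\Delta=\mu^2-4\lambda\nu$; equivalently, if $Q=(r_0x_0+r_1x_1)(s_0x_0+s_1x_1)$ then $\Delta=(r_0s_1-r_1s_0)^2$. *)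

theory Defs
  imports "HOL-Computational_Algebra.Polynomial"
begin

text \<open>Binary forms in x0, x1 over a field of characteristic 0 are represented as
 bivariate polynomials of type 'a poly poly: the inner variable is x0, the outer
 variable is x1.\<close>

definition bconst :: "'a::field_char_0 \<Rightarrow> 'a poly poly" where
  "bconst c = [:[:c:]:]"

definition bX0 :: "'a::field_char_0 poly poly" where
  "bX0 = [:[:0, 1:]:]"

definition bX1 :: "'a::field_char_0 poly poly" where
  "bX1 = [:0, 1:]"

definition d0 :: "'a::field_char_0 poly poly \<Rightarrow> 'a poly poly" where
  "d0 P = map_poly pderiv P"

definition d1 :: "'a::field_char_0 poly poly \<Rightarrow> 'a poly poly" where
  "d1 P = pderiv P"

text \<open>The operator
 Omega^k = (d/dx0 d/dy1 - d/dx1 d/dy0)^k is expanded binomially (the two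
 summands commute); after setting y := x, the j-th term applies
 d0^(k-j) d1^j to A and d1^(k-j) d0^j to B, with sign (-1)^j.\<close>
definition transvectant ::
  "nat \<Rightarrow> nat \<Rightarrow> nat \<Rightarrow> 'a::field_char_0 poly poly \<Rightarrow> 'a poly poly \<Rightarrow> 'a poly poly" where
  "transvectant a b k A B =
     bconst (fact (a - k) * fact (b - k) / (fact a * fact b)) *
     (\<Sum>j\<le>k. bconst ((-1) ^ j * of_nat (k choose j)) *
        (((d0 ^^ (k - j)) ((d1 ^^ j) A)) * ((d1 ^^ (k - j)) ((d0 ^^ j) B))))"

end

theory Submission
  imports Defs
begin

definition der :: "('b::comm_ring_1 \<Rightarrow> 'b) \<Rightarrow> bool" where
  "der f \<longleftrightarrow> (\<forall>x y. f (x + y) = f x + f y) \<and> (\<forall>x y. f (x * y) = f x * y + x * f y)"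

lemma der_add: "der f \<Longrightarrow> f (x + y) = f x + f y" by (simp add: der_def)
lemma der_mult: "der f \<Longrightarrow> f (x * y) = f x * y + x * f y" by (simp add: der_def)
lemma der_0: "der f \<Longrightarrow> f 0 = 0"
  using der_add[of f 0 0] by simp
lemma der_1: "der f \<Longrightarrow> f 1 = 0"
  using der_mult[of f 1 1] by simp
lemma der_uminus: "der f \<Longrightarrow> f (- x) = - f x"
  using der_add[of f x "-x"] der_0[of f] by (simp add: eq_neg_iff_add_eq_0 add.commute)
lemma der_diff: "der f \<Longrightarrow> f (x - y) = f x - f y"
  using der_add[of f x "-y"] der_uminus[of f y] by simp
lemma der_of_nat: "der f \<Longrightarrow> f (of_nat n) = 0"
  by (induction n) (simp_all add: der_0 der_1 der_add)
lemma der_sum: "der f \<Longrightarrow> f (sum g A) = (\<Sum>x\<in>A. f (g x))"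
  by (induction A rule: infinite_finite_induct) (simp_all add: der_0 der_add)
lemma der_power: "der f \<Longrightarrow> f (x ^ n) = of_nat n * x ^ (n - 1) * f x"
proof (induction n)
  case 0 then show ?case by (simp add: der_1)
next
  case (Suc n)
  then show ?case
    by (cases n) (simp_all add: der_mult algebra_simps)
qed
lemma der_const_mult: "der f \<Longrightarrow> f c = 0 \<Longrightarrow> f (c * x) = c * f x"
  by (simp add: der_mult)
lemma der_of_nat_mult: "der f \<Longrightarrow> f (of_nat n * x) = of_nat n * f x"
  by (simp add: der_mult der_of_nat)

lemma der_pderiv: "der (pderiv :: 'b::idom poly \<Rightarrow> _)"
  by (simp add: der_def pderiv_add pderiv_mult algebra_simps)

lemma additive_sum:
  assumes "\<And>x y. f (x + y) = f x + f y" "f 0 = 0"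
  shows "f (sum g A) = (\<Sum>x\<in>A. f (g x))"
  by (induction A rule: infinite_finite_induct) (simp_all add: assms)

lemma der_map_poly:
  assumes "der f" shows "der (map_poly f)"
proof -
  have f0: "f 0 = 0" using der_0[OF assms] .
  show ?thesis unfolding der_def
  proof (intro conjI allI)
    fix x y
    show "map_poly f (x + y) = map_poly f x + map_poly f y"
      by (rule poly_eqI) (simp add: coeff_map_poly f0 der_add[OF assms])
    show "map_poly f (x * y) = map_poly f x * y + x * map_poly f y"
      by (rule poly_eqI) (simp add: coeff_map_poly f0 coeff_mult der_sum[OF assms]
           der_mult[OF assms] sum.distrib)
  qed
qed

lemma map_poly_hom_mult:
  assumes "\<And>x y. f (x + y) = f x + f y" "\<And>x y. f (x * y) = f x * f y" "f 0 = 0"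
  shows "map_poly f (p * q) = map_poly f p * map_poly f q"
  by (rule poly_eqI) (simp add: coeff_map_poly coeff_mult assms additive_sum[of f])

lemma map_poly_hom_add:
  assumes "\<And>x y. f (x + y) = f x + f y" "f 0 = 0"
  shows "map_poly f (p + q) = map_poly f p + map_poly f q"
  by (rule poly_eqI) (simp add: coeff_map_poly assms)

lemma pderiv_map_poly_comm:
  assumes "f 0 = 0" "\<And>n x. f (of_nat n * x) = of_nat n * f x"
  shows "pderiv (map_poly f p) = map_poly f (pderiv p)"
  by (rule poly_eqI) (simp only: coeff_map_poly[of f, OF assms(1)] coeff_pderiv assms(2))

type_synonym 'a T = "'a poly poly poly poly"

definition ix :: "'a::field_char_0 poly poly \<Rightarrow> 'a T" where "ix A = [:[:A:]:]"
definition iy :: "'a::field_char_0 poly poly \<Rightarrow> 'a T" where "iy B = map_poly (map_poly bconst) B"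
definition Dx0 :: "'a::field_char_0 T \<Rightarrow> 'a T" where "Dx0 = map_poly (map_poly d0)"
definition Dx1 :: "'a::field_char_0 T \<Rightarrow> 'a T" where "Dx1 = map_poly (map_poly d1)"
definition Dy0 :: "'a::field_char_0 T \<Rightarrow> 'a T" where "Dy0 = map_poly pderiv"
definition Dy1 :: "'a::field_char_0 T \<Rightarrow> 'a T" where "Dy1 = pderiv"
definition diag :: "'a::field_char_0 T \<Rightarrow> 'a poly poly" where
  "diag P = poly (map_poly (\<lambda>r. poly r bX0) P) bX1"

lemma der_d0: "der (d0 :: 'a::field_char_0 poly poly \<Rightarrow> _)"
  unfolding d0_def[abs_def] by (intro der_map_poly der_pderiv)
lemma der_d1: "der (d1 :: 'a::field_char_0 poly poly \<Rightarrow> _)"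
  unfolding d1_def[abs_def] by (rule der_pderiv)
lemma der_Dx0: "der (Dx0 :: 'a::field_char_0 T \<Rightarrow> _)"
  unfolding Dx0_def by (intro der_map_poly der_d0)
lemma der_Dx1: "der (Dx1 :: 'a::field_char_0 T \<Rightarrow> _)"
  unfolding Dx1_def by (intro der_map_poly der_d1)
lemma der_Dy0: "der (Dy0 :: 'a::field_char_0 T \<Rightarrow> _)"
  unfolding Dy0_def by (intro der_map_poly der_pderiv)
lemma der_Dy1: "der (Dy1 :: 'a::field_char_0 T \<Rightarrow> _)"
  unfolding Dy1_def by (intro der_pderiv)

lemma ix_add: "ix (A + B) = ix A + ix B" by (simp add: ix_def)
lemma ix_mult: "ix (A * B) = ix A * ix B" by (simp add: ix_def)
lemma ix_0: "ix 0 = 0" by (simp add: ix_def)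
lemma ix_1: "ix 1 = 1" by (simp add: ix_def one_pCons)
lemma ix_uminus: "ix (- A) = - ix A" by (simp add: ix_def)
lemma ix_diff: "ix (A - B) = ix A - ix B" by (simp add: ix_def)
lemma ix_power: "ix (A ^ n) = ix A ^ n" by (induction n) (simp_all add: ix_1 ix_mult)
lemma ix_of_nat: "ix (of_nat n) = of_nat n" by (induction n) (simp_all add: ix_0 ix_1 ix_add)

lemma bconst_add: "bconst (x + y) = bconst x + bconst y" by (simp add: bconst_def)
lemma bconst_mult: "bconst (x * y) = bconst x * bconst y" by (simp add: bconst_def)
lemma bconst_0: "bconst 0 = 0" by (simp add: bconst_def)
lemma bconst_1: "bconst 1 = 1" by (simp add: bconst_def one_pCons)

lemma mb_add: "map_poly bconst (x + y) = map_poly bconst x + map_poly bconst y"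
  by (intro map_poly_hom_add bconst_add bconst_0)
lemma mb_mult: "map_poly bconst (x * y) = map_poly bconst x * map_poly bconst y"
  by (intro map_poly_hom_mult bconst_add bconst_mult bconst_0)
lemma mb_0: "map_poly bconst 0 = 0" by simp

lemma iy_add: "iy (A + B) = iy A + iy B" unfolding iy_def
  by (intro map_poly_hom_add mb_add mb_0)
lemma iy_mult: "iy (A * B) = iy A * iy B" unfolding iy_def
  by (intro map_poly_hom_mult mb_add mb_mult mb_0)
lemma iy_0: "iy 0 = 0" by (simp add: iy_def)
lemma iy_1: "iy 1 = 1" by (simp add: iy_def bconst_1)
lemma iy_uminus: "iy (- A) = - iy A"
proof -
  have "iy A + iy (-A) = 0" by (metis iy_add iy_0 add.right_inverse)
  then show ?thesis by (metis minus_unique)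
qed
lemma iy_diff: "iy (A - B) = iy A - iy B"
  using iy_add[of A "-B"] iy_uminus[of B] by simp
lemma iy_power: "iy (A ^ n) = iy A ^ n" by (induction n) (simp_all add: iy_1 iy_mult)
lemma iy_bconst: "iy (bconst c) = ix (bconst c)"
  by (simp add: iy_def ix_def bconst_def map_poly_pCons)

lemma additive_of_nat_mult:
  assumes "\<And>x y. f (x + y) = f x + f y" "f 0 = 0"
  shows "f (of_nat n * x) = of_nat n * f x"
  by (induction n) (simp_all add: assms distrib_right)

lemma map_poly_zero_fun: "map_poly (\<lambda>x. 0) p = 0"
  by (rule poly_eqI) (simp add: coeff_map_poly)

lemma d0_bconst: "d0 (bconst c) = 0" by (simp add: d0_def bconst_def map_poly_pCons)
lemma d1_bconst: "d1 (bconst c) = 0" by (simp add: d1_def bconst_def)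

lemma Dx0_ix: "Dx0 (ix A) = ix (d0 A)"
  by (simp add: Dx0_def ix_def map_poly_pCons der_0[OF der_d0])
lemma Dx1_ix: "Dx1 (ix A) = ix (d1 A)"
  by (simp add: Dx1_def ix_def map_poly_pCons der_0[OF der_d1])
lemma Dy0_ix: "Dy0 (ix A) = 0"
  by (simp add: Dy0_def ix_def map_poly_pCons)
lemma Dy1_ix: "Dy1 (ix A) = 0"
  by (simp add: Dy1_def ix_def)

lemma d0_mb: "map_poly d0 (map_poly bconst r) = 0"
  by (rule poly_eqI) (simp add: coeff_map_poly der_0[OF der_d0] bconst_0 d0_bconst)
lemma d1_mb: "map_poly d1 (map_poly bconst r) = 0"
  by (rule poly_eqI) (simp add: coeff_map_poly der_0[OF der_d1] bconst_0 d1_bconst)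
lemma Dx0_iy: "Dx0 (iy B) = 0"
  by (rule poly_eqI) (simp add: Dx0_def iy_def coeff_map_poly der_0[OF der_d0] bconst_0 d0_mb)
lemma Dx1_iy: "Dx1 (iy B) = 0"
  by (rule poly_eqI) (simp add: Dx1_def iy_def coeff_map_poly der_0[OF der_d1] bconst_0 d1_mb)

lemma mb_of_nat_mult: "map_poly bconst (of_nat n * x) = of_nat n * map_poly bconst x"
  by (intro additive_of_nat_mult mb_add mb_0)

lemma Dy1_iy: "Dy1 (iy B) = iy (d1 B)"
  unfolding Dy1_def iy_def d1_def
  by (rule pderiv_map_poly_comm) (simp_all add: mb_of_nat_mult)

lemma pderiv_mb: "pderiv (map_poly bconst r) = map_poly bconst (pderiv r)"
  by (rule pderiv_map_poly_comm) (simp_all add: bconst_0 additive_of_nat_mult bconst_add)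
lemma Dy0_iy: "Dy0 (iy B) = iy (d0 B)"
  by (rule poly_eqI) (simp add: Dy0_def iy_def d0_def coeff_map_poly bconst_0 pderiv_mb)

lemma ev0_add: "poly (x + y) bX0 = poly x bX0 + poly y bX0" by simp
lemma mev0_add: "map_poly (\<lambda>r. poly r bX0) (x + y) = map_poly (\<lambda>r. poly r bX0) x + map_poly (\<lambda>r. poly r bX0) y"
  by (intro map_poly_hom_add) simp_all
lemma mev0_mult: "map_poly (\<lambda>r. poly r bX0) (x * y) = map_poly (\<lambda>r. poly r bX0) x * map_poly (\<lambda>r. poly r bX0) y"
  by (intro map_poly_hom_mult) simp_all

lemma diag_add: "diag (P + R) = diag P + diag R" by (simp add: diag_def mev0_add)
lemma diag_mult: "diag (P * R) = diag P * diag R" by (simp add: diag_def mev0_mult)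
lemma diag_ix: "diag (ix A) = A" by (simp add: diag_def ix_def map_poly_pCons)
lemma diag_0: "diag 0 = 0" by (simp add: diag_def)
lemma diag_uminus: "diag (- P) = - diag P"
proof -
  have "diag P + diag (-P) = 0" by (metis diag_add diag_0 add.right_inverse)
  then show ?thesis by (metis minus_unique)
qed
lemma diag_diff: "diag (P - R) = diag P - diag R"
  using diag_add[of P "-R"] diag_uminus[of R] by simp
lemma diag_1: "diag 1 = 1" using diag_ix[of 1] by (simp add: ix_1)
lemma diag_power: "diag (P ^ n) = diag P ^ n"
  by (induction n) (simp_all add: diag_mult diag_1)
lemma diag_sum: "diag (sum f A) = (\<Sum>x\<in>A. diag (f x))"
  by (intro additive_sum diag_add diag_0)

lemma ev0_mb: "poly (map_poly bconst r) bX0 = [:r:]"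
  by (induction r) (simp_all add: map_poly_pCons bconst_def bX0_def)

lemma diag_iy: "diag (iy B) = B"
proof -
  have "map_poly (\<lambda>r. poly r bX0) (iy B) = map_poly ((\<lambda>r. poly r bX0) \<circ> map_poly bconst) B"
    unfolding iy_def by (rule map_poly_map_poly) simp_all
  also have "(\<lambda>r. poly r bX0) \<circ> map_poly bconst = (\<lambda>r. [:r:])"
    by (simp add: fun_eq_iff ev0_mb)
  finally show ?thesis
    by (simp add: diag_def bX1_def pcompose_altdef[symmetric])
qed

definition Om :: "'a::field_char_0 T \<Rightarrow> 'a T" where
  "Om P = Dx0 (Dy1 P) - Dx1 (Dy0 P)"

definition Tc :: "'a::field_char_0 \<Rightarrow> 'a T" where "Tc c = ix (bconst c)"

lemma Om_add: "Om (P + R) = Om P + Om R"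
  by (simp add: Om_def der_add[OF der_Dx0] der_add[OF der_Dx1] der_add[OF der_Dy0] der_add[OF der_Dy1])
lemma Om_diff: "Om (P - R) = Om P - Om R"
  by (simp add: Om_def der_diff[OF der_Dx0] der_diff[OF der_Dx1] der_diff[OF der_Dy0] der_diff[OF der_Dy1])
lemma Om_0: "Om 0 = 0"
  by (simp add: Om_def der_0[OF der_Dx0] der_0[OF der_Dx1] der_0[OF der_Dy0] der_0[OF der_Dy1])

lemma Dx0_Tc: "Dx0 (Tc c) = 0" by (simp add: Tc_def Dx0_ix d0_bconst ix_0)
lemma Dx1_Tc: "Dx1 (Tc c) = 0" by (simp add: Tc_def Dx1_ix d1_bconst ix_0)
lemma Dy0_Tc: "Dy0 (Tc c) = 0" by (simp add: Tc_def Dy0_ix)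
lemma Dy1_Tc: "Dy1 (Tc c) = 0" by (simp add: Tc_def Dy1_ix)

lemma Om_Tc_mult: "Om (Tc c * P) = Tc c * Om P"
  by (simp add: Om_def der_const_mult[OF der_Dx0] der_const_mult[OF der_Dx1]
     der_const_mult[OF der_Dy0] der_const_mult[OF der_Dy1] Dx0_Tc Dx1_Tc Dy0_Tc Dy1_Tc right_diff_distrib)

lemma Omk_diff: "(Om ^^ k) (P - R) = (Om ^^ k) P - (Om ^^ k) R"
  by (induction k) (simp_all add: Om_diff)
lemma Omk_add: "(Om ^^ k) (P + R) = (Om ^^ k) P + (Om ^^ k) R"
  by (induction k) (simp_all add: Om_add)
lemma Omk_0: "(Om ^^ k) 0 = 0"
  by (induction k) (simp_all add: Om_0)
lemma Omk_sum: "(Om ^^ k) (sum f A) = (\<Sum>x\<in>A. (Om ^^ k) (f x))"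
  by (intro additive_sum Omk_add Omk_0)
lemma Om_sum: "Om (sum f A) = (\<Sum>x\<in>A. Om (f x))"
  by (intro additive_sum Om_add Om_0)

lemma Om_tensor: "Om (ix A * iy B) = ix (d0 A) * iy (d1 B) - ix (d1 A) * iy (d0 B)"
  by (simp add: Om_def der_mult[OF der_Dx0] der_mult[OF der_Dx1] der_mult[OF der_Dy0]
      der_mult[OF der_Dy1] Dx0_ix Dx1_ix Dy0_ix Dy1_ix Dx0_iy Dx1_iy Dy0_iy Dy1_iy)

definition Strans :: "nat \<Rightarrow> 'a::field_char_0 poly poly \<Rightarrow> 'a poly poly \<Rightarrow> 'a poly poly" where
  "Strans k A B = (\<Sum>j\<le>k. bconst ((-1) ^ j * of_nat (k choose j)) *
        (((d0 ^^ (k - j)) ((d1 ^^ j) A)) * ((d1 ^^ (k - j)) ((d0 ^^ j) B))))"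

lemma d0_d1_comm: "d1 (d0 P) = d0 (d1 P)"
  unfolding d0_def d1_def
  by (rule pderiv_map_poly_comm) (simp_all add: der_of_nat_mult[OF der_pderiv])

lemma d1k_d0: "(d1 ^^ j) (d0 P) = d0 ((d1 ^^ j) P)"
  by (induction j) (simp_all add: d0_d1_comm)

lemma d0k_d1: "(d0 ^^ j) (d1 P) = d1 ((d0 ^^ j) P)"
  by (induction j) (simp_all add: d0_d1_comm)

lemma Strans_Suc: "Strans (Suc k) A B = Strans k (d0 A) (d1 B) - Strans k (d1 A) (d0 B)"
proof -
  define X where "X j = (d0^^(Suc k - j)) ((d1^^j) A) * (d1^^(Suc k - j)) ((d0^^j) B)" for j
  define c where "c n j = bconst ((-1)^j * of_nat (n choose j) :: 'a)" for n j
  have S1: "Strans (Suc k) A B = (\<Sum>j\<le>Suc k. c (Suc k) j * X j)"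
    by (simp add: Strans_def c_def X_def)
  have S2: "Strans k (d0 A) (d1 B) = (\<Sum>j\<le>k. c k j * X j)"
    unfolding Strans_def c_def X_def
  proof (rule sum.cong)
    fix j assume "j \<in> {..k}"
    then have e: "Suc k - j = Suc (k - j)" by auto
    show "bconst ((- 1) ^ j * of_nat (k choose j)) * ((d0 ^^ (k - j)) ((d1 ^^ j) (d0 A)) * (d1 ^^ (k - j)) ((d0 ^^ j) (d1 B))) =
          bconst ((- 1) ^ j * of_nat (k choose j)) * ((d0 ^^ (Suc k - j)) ((d1 ^^ j) A) * (d1 ^^ (Suc k - j)) ((d0 ^^ j) B))"
      by (simp only: e funpow_Suc_right o_apply d1k_d0 d0k_d1)
  qed simp
  have S3: "Strans k (d1 A) (d0 B) = (\<Sum>j\<le>k. c k j * X (Suc j))"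
    unfolding Strans_def c_def X_def
    by (simp only: funpow_Suc_right o_apply diff_Suc_Suc)
  have C: "c (Suc k) (Suc j) = c k (Suc j) - c k j" for j
    by (simp add: c_def bconst_def algebra_simps)
  have c0: "c n 0 = 1" for n by (simp add: c_def bconst_1)
  have ck: "c k (Suc k) = 0" by (simp add: c_def bconst_0 binomial_eq_0)
  have "(\<Sum>j\<le>Suc k. c (Suc k) j * X j) = c (Suc k) 0 * X 0 + (\<Sum>j\<le>k. c (Suc k) (Suc j) * X (Suc j))"
    by (rule sum.atMost_Suc_shift)
  also have "\<dots> = X 0 + (\<Sum>j\<le>k. c k (Suc j) * X (Suc j)) - (\<Sum>j\<le>k. c k j * X (Suc j))"
    by (simp add: C c0 left_diff_distrib sum_subtractf)
  also have "X 0 + (\<Sum>j\<le>k. c k (Suc j) * X (Suc j)) = (\<Sum>j\<le>Suc k. c k j * X j)"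
    by (subst sum.atMost_Suc_shift) (simp add: c0)
  also have "\<dots> = (\<Sum>j\<le>k. c k j * X j)"
    by (simp add: ck)
  finally show ?thesis using S1 S2 S3 by simp
qed

lemma diag_Om: "diag ((Om ^^ k) (ix A * iy B)) = Strans k A B"
proof (induction k arbitrary: A B)
  case 0
  then show ?case by (simp add: diag_mult diag_ix diag_iy Strans_def bconst_1)
next
  case (Suc k)
  have "(Om ^^ Suc k) (ix A * iy B) = (Om ^^ k) (Om (ix A * iy B))"
    by (simp only: funpow_Suc_right o_apply)
  then show ?case
    by (simp add: Om_tensor Omk_diff diag_diff Suc.IH Strans_Suc)
qed

lemma transvectant_diag: "transvectant a b k A B =
   bconst (fact (a - k) * fact (b - k) / (fact a * fact b)) * diag ((Om ^^ k) (ix A * iy B))"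
  by (simp add: transvectant_def diag_Om Strans_def)

definition Qf :: "'a::field_char_0 \<Rightarrow> 'a \<Rightarrow> 'a \<Rightarrow> 'a poly poly" where
  "Qf lam mu nu = bconst lam * bX0 ^ 2 + bconst mu * bX0 * bX1 + bconst nu * bX1 ^ 2"
definition L0 :: "'a::field_char_0 \<Rightarrow> 'a \<Rightarrow> 'a \<Rightarrow> 'a poly poly" where
  "L0 lam mu nu = 2 * bconst lam * bX0 + bconst mu * bX1"
definition L1 :: "'a::field_char_0 \<Rightarrow> 'a \<Rightarrow> 'a \<Rightarrow> 'a poly poly" where
  "L1 lam mu nu = bconst mu * bX0 + 2 * bconst nu * bX1"
definition W :: "'a::field_char_0 T" where
  "W = ix bX0 * iy bX1 - ix bX1 * iy bX0"

lemma d0_X0: "d0 bX0 = 1" by (simp add: d0_def bX0_def map_poly_pCons one_pCons pderiv_pCons)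
lemma d0_X1: "d0 bX1 = 0" by (simp add: d0_def bX1_def map_poly_pCons)
lemma d1_X0: "d1 bX0 = 0" by (simp add: d1_def bX0_def)
lemma d1_X1: "d1 bX1 = 1" by (simp add: d1_def bX1_def pderiv_pCons)

lemma d0_Q: "d0 (Qf lam mu nu) = L0 lam mu nu"
  by (simp add: Qf_def L0_def der_add[OF der_d0] der_mult[OF der_d0] der_power[OF der_d0]
       d0_bconst d0_X0 d0_X1 algebra_simps)
lemma d1_Q: "d1 (Qf lam mu nu) = L1 lam mu nu"
  by (simp add: Qf_def L1_def der_add[OF der_d1] der_mult[OF der_d1] der_power[OF der_d1]
       d1_bconst d1_X0 d1_X1 algebra_simps)

lemma euler_Q: "bX0 * L0 lam mu nu + bX1 * L1 lam mu nu = 2 * Qf lam mu nu"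
  by (simp add: Qf_def L0_def L1_def algebra_simps power2_eq_square)

lemma Tc_mult: "Tc (x * y) = Tc x * Tc y" by (simp add: Tc_def bconst_mult ix_mult)
lemma Tc_add: "Tc (x + y) = Tc x + Tc y" by (simp add: Tc_def bconst_add ix_add)
lemma Tc_diff: "Tc (x - y) = Tc x - Tc y" by (simp add: Tc_def ix_def bconst_def)
lemma Tc_uminus: "Tc (- x) = - Tc x" by (simp add: Tc_def ix_def bconst_def)
lemma Tc_power: "Tc (x ^ n) = Tc x ^ n" by (induction n) (simp_all add: Tc_mult, simp add: Tc_def bconst_1 ix_1)
lemma Tc_of_nat: "Tc (of_nat n) = of_nat n"
  by (induction n) (simp_all add: Tc_add, simp_all add: Tc_def bconst_1 bconst_0 ix_1 ix_0)
lemma Tc_numeral: "Tc (numeral n) = numeral n"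
  using Tc_of_nat[of "numeral n"] by simp

lemma ix_bconst: "ix (bconst c) = Tc c" by (simp add: Tc_def)
lemma iy_bconst': "iy (bconst c) = Tc c" by (simp add: Tc_def iy_bconst)
lemma ix_numeral: "ix (numeral n) = numeral n" using ix_of_nat[of "numeral n"] by simp
lemma iy_of_nat: "iy (of_nat n) = of_nat n" by (induction n) (simp_all add: iy_0 iy_1 iy_add)
lemma iy_numeral: "iy (numeral n) = numeral n" using iy_of_nat[of "numeral n"] by simp

lemma KW: "ix (L0 lam mu nu) * iy (L1 lam mu nu) - ix (L1 lam mu nu) * iy (L0 lam mu nu)
         = Tc (- (mu ^ 2 - 4 * lam * nu)) * W"
  by (simp add: L0_def L1_def W_def ix_add ix_mult iy_add iy_mult ix_bconst iy_bconst'
     ix_numeral iy_numeral Tc_uminus Tc_diff Tc_mult Tc_power Tc_numeral algebra_simps power2_eq_square)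

lemma Om_mult: "Om (P * R) = Om P * R + P * Om R +
   (Dx0 P * Dy1 R + Dy1 P * Dx0 R - Dx1 P * Dy0 R - Dy0 P * Dx1 R)"
  by (simp add: Om_def der_mult[OF der_Dx0] der_mult[OF der_Dx1] der_mult[OF der_Dy0]
      der_mult[OF der_Dy1] der_add[OF der_Dx0] der_add[OF der_Dx1] algebra_simps)

lemma Dx0_W: "Dx0 W = iy bX1"
  by (simp add: W_def der_diff[OF der_Dx0] der_mult[OF der_Dx0] Dx0_ix Dx0_iy d0_X0 d0_X1 ix_0 ix_1)
lemma Dx1_W: "Dx1 W = - iy bX0"
  by (simp add: W_def der_diff[OF der_Dx1] der_mult[OF der_Dx1] Dx1_ix Dx1_iy d1_X0 d1_X1 ix_0 ix_1)
lemma Dy0_W: "Dy0 W = - ix bX1"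
  by (simp add: W_def der_diff[OF der_Dy0] der_mult[OF der_Dy0] Dy0_ix Dy0_iy d0_X0 d0_X1 iy_0 iy_1)
lemma Dy1_W: "Dy1 W = ix bX0"
  by (simp add: W_def der_diff[OF der_Dy1] der_mult[OF der_Dy1] Dy1_ix Dy1_iy d1_X0 d1_X1 iy_0 iy_1)

lemma Dx0_ixX0: "Dx0 (ix bX0) = 1" by (simp add: Dx0_ix d0_X0 ix_1)
lemma Dx1_ixX1: "Dx1 (ix bX1) = 1" by (simp add: Dx1_ix d1_X1 ix_1)

lemma pow_pred: "of_nat a * (x::'b::comm_ring_1) ^ (a - 1) * x = of_nat a * x ^ a"
  by (cases a) (simp_all add: algebra_simps)

lemma Om_Wpow: "Om (W ^ c) = of_nat (c * (c + 1)) * W ^ (c - 1)"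
proof -
  have a: "Dy1 (W ^ c) = of_nat c * W ^ (c - 1) * ix bX0"
    by (simp add: der_power[OF der_Dy1] Dy1_W)
  have b: "Dy0 (W ^ c) = - (of_nat c * W ^ (c - 1) * ix bX1)"
    by (simp add: der_power[OF der_Dy0] Dy0_W)
  have c: "Dx0 (Dy1 (W ^ c)) = of_nat c * (of_nat (c - 1) * W ^ (c - 1 - 1) * iy bX1 * ix bX0 + W ^ (c - 1))"
    unfolding a
    by (simp add: der_mult[OF der_Dx0] der_power[OF der_Dx0] der_of_nat[OF der_Dx0] Dx0_W Dx0_ixX0 algebra_simps)
  have d: "Dx1 (Dy0 (W ^ c)) = - (of_nat c * (of_nat (c - 1) * W ^ (c - 1 - 1) * (- iy bX0) * ix bX1 + W ^ (c - 1)))"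
    unfolding b
    by (simp add: der_uminus[OF der_Dx1] der_mult[OF der_Dx1] der_power[OF der_Dx1] der_of_nat[OF der_Dx1] Dx1_W Dx1_ixX1 algebra_simps)
  have e: "iy bX1 * ix bX0 + (- iy bX0) * ix bX1 = W" by (simp add: W_def algebra_simps)
  have "Om (W ^ c) = of_nat c * (of_nat (c - 1) * W ^ (c - 1 - 1) * (iy bX1 * ix bX0 + (- iy bX0) * ix bX1) + 2 * W ^ (c - 1))"
    unfolding Om_def c d by (simp add: algebra_simps)
  also have "\<dots> = of_nat c * (of_nat (c - 1) * W ^ (c - 1 - 1) * W + 2 * W ^ (c - 1))"
    by (simp only: e)
  also have "\<dots> = of_nat (c * (c + 1)) * W ^ (c - 1)"
  proof (cases c)
    case 0 then show ?thesis by simp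
  next
    case (Suc n)
    then show ?thesis
      by (cases n) (simp_all add: algebra_simps)
  qed
  finally show ?thesis .
qed


definition G :: "'a::field_char_0 \<Rightarrow> 'a \<Rightarrow> 'a \<Rightarrow> nat \<Rightarrow> nat \<Rightarrow> nat \<Rightarrow> 'a T" where
  "G lam mu nu a b c = ix (Qf lam mu nu ^ a) * iy (Qf lam mu nu ^ b) * W ^ c"

lemma euler_pow:
  "bX0 * d0 (Qf lam mu nu ^ a) + bX1 * d1 (Qf lam mu nu ^ a) = 2 * of_nat a * Qf lam mu nu ^ a"
proof -
  have "bX0 * d0 (Qf lam mu nu ^ a) + bX1 * d1 (Qf lam mu nu ^ a)
      = of_nat a * Qf lam mu nu ^ (a - 1) * (bX0 * L0 lam mu nu + bX1 * L1 lam mu nu)"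
    by (simp add: der_power[OF der_d0] der_power[OF der_d1] d0_Q d1_Q algebra_simps)
  also have "\<dots> = 2 * (of_nat a * Qf lam mu nu ^ (a - 1) * Qf lam mu nu)"
    by (simp add: euler_Q)
  also have "\<dots> = 2 * of_nat a * Qf lam mu nu ^ a" by (subst pow_pred) (simp add: mult.assoc)
  finally show ?thesis .
qed

lemma Om_G: "Om (G lam mu nu a b c) =
    Tc (- (mu ^ 2 - 4 * lam * nu) * of_nat (a * b)) * G lam mu nu (a - 1) (b - 1) (Suc c)
  + Tc (of_nat (c * (c + 1 + 2 * a + 2 * b))) * G lam mu nu a b (c - 1)"
proof -
  define Q where "Q = Qf lam mu nu"
  define f where "f = ix (Q ^ a) * iy (Q ^ b)"
  define D where "D = - (mu ^ 2 - 4 * lam * nu)"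
  have Omf: "Om f = of_nat a * of_nat b * ix (Q ^ (a - 1)) * iy (Q ^ (b - 1)) * (Tc D * W)"
  proof -
    have "Om f = of_nat a * of_nat b * ix (Q ^ (a - 1)) * iy (Q ^ (b - 1)) *
       (ix (L0 lam mu nu) * iy (L1 lam mu nu) - ix (L1 lam mu nu) * iy (L0 lam mu nu))"
      unfolding f_def Om_tensor Q_def
      by (simp add: der_power[OF der_d0] der_power[OF der_d1] d0_Q d1_Q ix_mult iy_mult
          ix_of_nat iy_of_nat algebra_simps)
    then show ?thesis by (simp add: KW D_def)
  qed
  have Dx0f: "Dx0 f = ix (d0 (Q ^ a)) * iy (Q ^ b)"
    by (simp add: f_def der_mult[OF der_Dx0] Dx0_ix Dx0_iy)
  have Dx1f: "Dx1 f = ix (d1 (Q ^ a)) * iy (Q ^ b)"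
    by (simp add: f_def der_mult[OF der_Dx1] Dx1_ix Dx1_iy)
  have Dy0f: "Dy0 f = ix (Q ^ a) * iy (d0 (Q ^ b))"
    by (simp add: f_def der_mult[OF der_Dy0] Dy0_ix Dy0_iy)
  have Dy1f: "Dy1 f = ix (Q ^ a) * iy (d1 (Q ^ b))"
    by (simp add: f_def der_mult[OF der_Dy1] Dy1_ix Dy1_iy)
  have Dg: "Dx0 (W ^ c) = of_nat c * W ^ (c - 1) * iy bX1"
           "Dx1 (W ^ c) = - (of_nat c * W ^ (c - 1) * iy bX0)"
           "Dy0 (W ^ c) = - (of_nat c * W ^ (c - 1) * ix bX1)"
           "Dy1 (W ^ c) = of_nat c * W ^ (c - 1) * ix bX0"
    by (simp_all add: der_power[OF der_Dx0] der_power[OF der_Dx1] der_power[OF der_Dy0]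
          der_power[OF der_Dy1] Dx0_W Dx1_W Dy0_W Dy1_W)
  have cross: "Dx0 f * Dy1 (W ^ c) + Dy1 f * Dx0 (W ^ c) - Dx1 f * Dy0 (W ^ c) - Dy0 f * Dx1 (W ^ c)
      = of_nat c * W ^ (c - 1) * (ix (bX0 * d0 (Q ^ a) + bX1 * d1 (Q ^ a)) * iy (Q ^ b)
          + ix (Q ^ a) * iy (bX0 * d0 (Q ^ b) + bX1 * d1 (Q ^ b)))"
    unfolding Dx0f Dx1f Dy0f Dy1f Dg
    by (simp add: ix_add ix_mult iy_add iy_mult algebra_simps)
  also have "\<dots> = of_nat c * W ^ (c - 1) * (2 * of_nat a + 2 * of_nat b) * f"
    unfolding Q_def euler_pow f_def
    by (simp add: ix_mult iy_mult ix_of_nat iy_of_nat ix_numeral iy_numeral algebra_simps)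
  finally have cross': "Dx0 f * Dy1 (W ^ c) + Dy1 f * Dx0 (W ^ c) - Dx1 f * Dy0 (W ^ c) - Dy0 f * Dx1 (W ^ c)
      = of_nat c * W ^ (c - 1) * (2 * of_nat a + 2 * of_nat b) * f" .
  have "Om (G lam mu nu a b c) = Om (f * W ^ c)" by (simp add: G_def f_def Q_def)
  also have "\<dots> = Om f * W ^ c + f * Om (W ^ c) + of_nat c * W ^ (c - 1) * (2 * of_nat a + 2 * of_nat b) * f"
    by (simp only: Om_mult cross')
  also have "\<dots> = Tc D * of_nat a * of_nat b * (ix (Q ^ (a - 1)) * iy (Q ^ (b - 1)) * W ^ Suc c)
      + of_nat c * (of_nat c + 1 + 2 * of_nat a + 2 * of_nat b) * (f * W ^ (c - 1))"
    by (simp add: Omf Om_Wpow algebra_simps)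
  also have "\<dots> = Tc (- (mu ^ 2 - 4 * lam * nu) * of_nat (a * b)) * G lam mu nu (a - 1) (b - 1) (Suc c)
  + Tc (of_nat (c * (c + 1 + 2 * a + 2 * b))) * G lam mu nu a b (c - 1)"
    by (simp add: G_def f_def Q_def D_def Tc_mult Tc_of_nat Tc_add Tc_diff Tc_uminus Tc_power Tc_numeral algebra_simps)
  finally show ?thesis .
qed

lemma div_sum_lemma:
  fixes X Y Z w A B C :: "'a::field"
  assumes "A \<noteq> 0" "B \<noteq> 0" "C \<noteq> 0" "X * B * C = Y * A * C + w * Z * A * B"
  shows "X / A = Y / B + w * (Z / C)"
  using assms by (simp add: field_simps)

lemma key_nat2:
  fixes k d c c0 g e w :: nat
  assumes k: "k = 2*d+1+c" and e: "e = c+g" and c: "c = Suc c0" and w: "w = (c+1)*(c+2+2*g)"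
  shows "(fact (Suc k) * fact (d+1+e)) * (fact (d+1) * fact c0 * fact (Suc e)) * (fact d * fact (Suc c) * fact (Suc e))
    = (fact k * fact (d+2+e)) * (fact (d+1) * fact c * fact e) * (fact d * fact (Suc c) * fact (Suc e))
      + w * (fact k * fact (d+1+e)) * (fact (d+1) * fact c * fact e) * (fact (d+1) * fact c0 * fact (Suc e))"
proof -
  define K :: nat where "K = fact k"
  define M :: nat where "M = fact (d+1+e)"
  define fd :: nat where "fd = fact d"
  define f0 :: nat where "f0 = fact c0"
  define fe :: nat where "fe = fact e"
  have h1: "fact (Suc k) = (Suc k) * K" by (simp add: K_def)
  have h2: "fact (d+2+e) = (d+2+e) * M"
  proof -
    have "d+2+e = Suc (d+1+e)" by simp
    then show ?thesis by (simp only: fact_Suc M_def of_nat_id)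
  qed
  have h3: "fact (d+1) = (d+1) * fd" by (simp add: fd_def)
  have h4: "fact c = c * f0" by (simp add: f0_def c)
  have h5: "fact (Suc c) = (c+1) * (c * f0)" by (simp add: f0_def c)
  have h6: "fact (Suc e) = (e+1) * fe" by (simp add: fe_def)
  have hK: "fact k = K" by (simp add: K_def)
  have hM: "fact (d+1+e) = M" by (simp add: M_def)
  have hd: "fact d = fd" by (simp add: fd_def)
  have h0: "fact c0 = f0" by (simp add: f0_def)
  have he: "fact e = fe" by (simp add: fe_def)
  define Com where "Com = K*M*fd*fd*f0*f0*fe*fe*(e+1)*(d+1)*c"
  have core: "(Suc k)*(c+1)*(e+1) = (d+2+e)*(c+1)*c + w*(d+1)"
    unfolding k e c w by (simp add: algebra_simps)
  have L: "(fact (Suc k) * fact (d+1+e)) * (fact (d+1) * fact c0 * fact (Suc e)) * (fact d * fact (Suc c) * fact (Suc e))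
       = ((Suc k)*(c+1)*(e+1)) * Com"
    unfolding Com_def h1 h2 h3 h4 h5 h6 hK hM hd h0 he by (simp only: ac_simps)
  have R1: "(fact k * fact (d+2+e)) * (fact (d+1) * fact c * fact e) * (fact d * fact (Suc c) * fact (Suc e))
       = ((d+2+e)*(c+1)*c) * Com"
    unfolding Com_def h1 h2 h3 h4 h5 h6 hK hM hd h0 he by (simp only: ac_simps)
  have R2: "w * (fact k * fact (d+1+e)) * (fact (d+1) * fact c * fact e) * (fact (d+1) * fact c0 * fact (Suc e))
       = (w*(d+1)) * Com"
    unfolding Com_def h1 h2 h3 h4 h5 h6 hK hM hd h0 he by (simp only: ac_simps)
  show ?thesis
    unfolding L R1 R2 core by (simp only: distrib_right)
qed

lemma key_nat0:
  fixes k d g e w :: nat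
  assumes k: "k = 2*d+1" and e: "e = g" and w: "w = 1*(2+2*g)"
  shows "(fact (Suc k) * fact (d+1+e)) * (fact d * fact (Suc 0) * fact (Suc e))
    = w * (fact k * fact (d+1+e)) * (fact (d+1) * fact 0 * fact e)"
proof -
  define K :: nat where "K = fact k"
  define M :: nat where "M = fact (d+1+e)"
  define fd :: nat where "fd = fact d"
  define fe :: nat where "fe = fact e"
  have h1: "fact (Suc k) = (Suc k) * K" by (simp add: K_def)
  have h3: "fact (d+1) = (d+1) * fd" by (simp add: fd_def)
  have h6: "fact (Suc e) = (e+1) * fe" by (simp add: fe_def)
  have hK: "fact k = K" by (simp add: K_def)
  have hM: "fact (d+1+e) = M" by (simp add: M_def)
  have hd: "fact d = fd" by (simp add: fd_def)
  have he: "fact e = fe" by (simp add: fe_def)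
  have core: "Suc k * (e+1) = w * (d+1)" unfolding k e w by (simp add: algebra_simps)
  have L: "(fact (Suc k) * fact (d+1+e)) * (fact d * fact (Suc 0) * fact (Suc e)) = (Suc k * (e+1)) * (K*M*fd*fe)"
    unfolding h1 h3 h6 hK hM hd he fact_0 One_nat_def[symmetric] fact_1 by (simp only: ac_simps mult_1_right mult_1_left)
  have R: "w * (fact k * fact (d+1+e)) * (fact (d+1) * fact 0 * fact e) = (w * (d+1)) * (K*M*fd*fe)"
    unfolding h1 h3 h6 hK hM hd he fact_0 by (simp only: ac_simps mult_1_right mult_1_left)
  show ?thesis unfolding L R core ..
qed

definition bcl :: "nat \<Rightarrow> nat \<Rightarrow> nat \<Rightarrow> 'a::field_char_0" where
  "bcl N k u = (if u \<le> k \<and> k \<le> 2*u then fact k * fact (N-u) / (fact (k-u) * fact (2*u-k) * fact (N-k)) else 0)"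

lemma div_single_lemma:
  fixes X Z w A C :: "'a::field"
  assumes "A \<noteq> 0" "C \<noteq> 0" "X * C = w * Z * A"
  shows "X / A = 0 + w * (Z / C)"
  using assms by (simp add: field_simps)

lemma bcl_main:
  assumes k: "k = 2*d+1+c" and u: "u = d+1+c" and N: "N = 2*d+2+2*c+g"
  shows "(bcl N (Suc k) u :: 'a::field_char_0) = (if c = 0 then 0 else bcl N k (u-1)) + of_nat ((c+1)*(c+2+2*g)) * bcl N k u"
proof -
  define e where "e = c + g"
  define w where "w = (c+1)*(c+2+2*g)"
  have c1: "(u \<le> Suc k \<and> Suc k \<le> 2*u) = True" using k u by simp
  have a1: "Suc k - u = d+1" "2*u - Suc k = c" "N - Suc k = e" "N - u = d+1+e" using k u N e_def by simp_all
  have v1: "(bcl N (Suc k) u :: 'a) = fact (Suc k) * fact (d+1+e) / (fact (d+1) * fact c * fact e)"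
    by (simp only: bcl_def c1 a1 if_True)
  have c3: "(u \<le> k \<and> k \<le> 2*u) = True" using k u by simp
  have a3: "k - u = d" "2*u - k = Suc c" "N - k = Suc e" "N - u = d+1+e" using k u N e_def by simp_all
  have v3: "(bcl N k u :: 'a) = fact k * fact (d+1+e) / (fact d * fact (Suc c) * fact (Suc e))"
    by (simp only: bcl_def c3 a3 if_True)
  show ?thesis
  proof (cases c)
    case 0
    have "(fact (Suc k) * fact (d+1+e)) * (fact d * fact (Suc 0) * fact (Suc e))
      = w * (fact k * fact (d+1+e)) * (fact (d+1) * fact 0 * fact e)"
      by (rule key_nat0) (use k e_def w_def 0 in simp_all)
    then have "(of_nat ((fact (Suc k) * fact (d+1+e)) * (fact d * fact (Suc 0) * fact (Suc e))) :: 'a)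
      = of_nat (w * (fact k * fact (d+1+e)) * (fact (d+1) * fact 0 * fact e))" by (rule arg_cong)
    then have I: "((fact (Suc k) * fact (d+1+e)) * (fact d * fact (Suc 0) * fact (Suc e)) :: 'a)
      = of_nat w * (fact k * fact (d+1+e)) * (fact (d+1) * fact 0 * fact e)"
      by (simp only: of_nat_mult of_nat_fact)
    have "(bcl N (Suc k) u :: 'a) = 0 + of_nat w * bcl N k u"
      unfolding v1 v3 0 by (rule div_single_lemma) (simp_all only: I fact_nonzero mult_eq_0_iff de_Morgan_disj not_False_eq_True conj_absorb)
    then show ?thesis using 0 w_def by simp
  next
    case (Suc c0)
    have c2: "(u - 1 \<le> k \<and> k \<le> 2*(u-1)) = True" using k u Suc by simp
    have a2: "k - (u-1) = d+1" "2*(u-1) - k = c0" "N - k = Suc e" "N - (u-1) = d+2+e" using k u N e_def Suc by simp_all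
    have v2: "(bcl N k (u-1) :: 'a) = fact k * fact (d+2+e) / (fact (d+1) * fact c0 * fact (Suc e))"
      by (simp only: bcl_def c2 a2 if_True)
    have "(fact (Suc k) * fact (d+1+e)) * (fact (d+1) * fact c0 * fact (Suc e)) * (fact d * fact (Suc c) * fact (Suc e))
    = (fact k * fact (d+2+e)) * (fact (d+1) * fact c * fact e) * (fact d * fact (Suc c) * fact (Suc e))
      + w * (fact k * fact (d+1+e)) * (fact (d+1) * fact c * fact e) * (fact (d+1) * fact c0 * fact (Suc e))"
      by (rule key_nat2[OF k e_def Suc w_def])
    then have "(of_nat ((fact (Suc k) * fact (d+1+e)) * (fact (d+1) * fact c0 * fact (Suc e)) * (fact d * fact (Suc c) * fact (Suc e))) :: 'a)
    = of_nat ((fact k * fact (d+2+e)) * (fact (d+1) * fact c * fact e) * (fact d * fact (Suc c) * fact (Suc e))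
      + w * (fact k * fact (d+1+e)) * (fact (d+1) * fact c * fact e) * (fact (d+1) * fact c0 * fact (Suc e)))"
      by (rule arg_cong)
    then have I: "((fact (Suc k) * fact (d+1+e)) * (fact (d+1) * fact c0 * fact (Suc e)) * (fact d * fact (Suc c) * fact (Suc e)) :: 'a)
    = (fact k * fact (d+2+e)) * (fact (d+1) * fact c * fact e) * (fact d * fact (Suc c) * fact (Suc e))
      + of_nat w * (fact k * fact (d+1+e)) * (fact (d+1) * fact c * fact e) * (fact (d+1) * fact c0 * fact (Suc e))"
      by (simp only: of_nat_mult of_nat_add of_nat_fact)
    have "(bcl N (Suc k) u :: 'a) = bcl N k (u-1) + of_nat w * bcl N k u"
      unfolding v1 v2 v3 by (rule div_sum_lemma) (simp_all only: I fact_nonzero mult_eq_0_iff de_Morgan_disj not_False_eq_True conj_absorb)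
    then show ?thesis using Suc w_def by simp
  qed
qed


lemma bcl_step:
  assumes up: "u \<le> p" and uq: "u \<le> q" and kN: "Suc k \<le> p+q"
  shows "(bcl (p+q) (Suc k) u :: 'a::field_char_0) = (if u = 0 then 0 else bcl (p+q) k (u-1))
     + of_nat ((2*u-k)*((2*u-k)+1+2*(p-u)+2*(q-u))) * bcl (p+q) k u"
proof (cases "u = 0")
  case True
  then show ?thesis by (simp add: bcl_def)
next
  case False
  consider "k < u - 1" | "k = u - 1" | "2*u < Suc k" | "u - 1 < k \<and> Suc k \<le> 2*u" by linarith
  then show ?thesis
  proof cases
    case 1
    then have "\<not> u \<le> Suc k" "\<not> u - 1 \<le> k" "\<not> u \<le> k" by auto
    then show ?thesis using False by (simp add: bcl_def)
  next
    case 2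
    then have uk: "u = Suc k" using False by simp
    have nz: "(1 + of_nat k :: 'a) \<noteq> 0" using of_nat_neq_0[of k, where 'a='a] by (simp add: add.commute)
    show ?thesis using uk nz by (simp add: bcl_def)
  next
    case 3
    then show ?thesis using False by (auto simp add: bcl_def)
  next
    case 4
    define d where "d = k - u"
    define c where "c = 2*u - Suc k"
    define g where "g = p + q - 2*u"
    have k: "k = 2*d+1+c" and u: "u = d+1+c" and N: "p+q = 2*d+2+2*c+g"
      using 4 up uq unfolding d_def c_def g_def by auto
    have m: "(bcl (p+q) (Suc k) u :: 'a) = (if c = 0 then 0 else bcl (p+q) k (u-1)) + of_nat ((c+1)*(c+2+2*g)) * bcl (p+q) k u"
      by (rule bcl_main[OF k u N])
    have w: "(2*u-k)*((2*u-k)+1+2*(p-u)+2*(q-u)) = (c+1)*(c+2+2*g)"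
    proof -
      have w1: "2*u - k = c+1" using k u by simp
      have w2: "(2*u-k)+1+2*(p-u)+2*(q-u) = c+2+2*g" using w1 up uq unfolding g_def by arith
      show ?thesis by (simp only: w1[symmetric] w2)
    qed
    have z: "c = 0 \<Longrightarrow> (bcl (p+q) k (u-1) :: 'a) = 0"
      using k u by (simp add: bcl_def)
    show ?thesis unfolding w m
    proof (cases "c = 0")
      case True
      show "(if c = 0 then 0 else bcl (p + q) k (u - 1) :: 'a) + of_nat ((c + 1) * (c + 2 + 2 * g)) * bcl (p + q) k u =
        (if u = 0 then 0 else bcl (p + q) k (u - 1)) + of_nat ((c + 1) * (c + 2 + 2 * g)) * bcl (p + q) k u"
        using True False z by simp
    next
      case F2: False
      show "(if c = 0 then 0 else bcl (p + q) k (u - 1) :: 'a) + of_nat ((c + 1) * (c + 2 + 2 * g)) * bcl (p + q) k u =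
        (if u = 0 then 0 else bcl (p + q) k (u - 1)) + of_nat ((c + 1) * (c + 2 + 2 * g)) * bcl (p + q) k u"
        using F2 False by (simp only: if_False)
    qed
  qed
qed

fun alpha :: "nat \<Rightarrow> nat \<Rightarrow> 'a::field_char_0 \<Rightarrow> nat \<Rightarrow> nat \<Rightarrow> 'a" where
  "alpha p q D 0 u = (if u = 0 then 1 else 0)"
| "alpha p q D (Suc k) u =
     (if u = 0 then 0 else D * of_nat ((p - (u-1)) * (q - (u-1))) * alpha p q D k (u-1))
   + of_nat ((2*u-k)*((2*u-k)+1+2*(p-u)+2*(q-u))) * alpha p q D k u"

fun beta :: "nat \<Rightarrow> nat \<Rightarrow> nat \<Rightarrow> nat \<Rightarrow> 'a::field_char_0" where
  "beta p q 0 u = (if u = 0 then 1 else 0)"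
| "beta p q (Suc k) u = (if u = 0 then 0 else beta p q k (u-1))
   + of_nat ((2*u-k)*((2*u-k)+1+2*(p-u)+2*(q-u))) * beta p q k u"

definition Pf :: "nat \<Rightarrow> nat \<Rightarrow> nat \<Rightarrow> 'a::field_char_0" where
  "Pf p q u = (\<Prod>i<u. of_nat (p - i) * of_nat (q - i))"

lemma alpha_beta: "alpha p q D k u = D ^ u * Pf p q u * beta p q k u"
proof (induction k arbitrary: u)
  case 0
  then show ?case by (simp add: Pf_def)
next
  case (Suc k)
  show ?case
  proof (cases u)
    case 0
    then show ?thesis by (simp add: Suc.IH)
  next
    case (Suc v)
    have P: "Pf p q (Suc v) = (Pf p q v :: 'a) * (of_nat (p - v) * of_nat (q - v))"
      by (simp add: Pf_def)
    show ?thesis unfolding alpha.simps beta.simps Suc.IH of_nat_mult[of "p - _" "q - _"] using Suc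
      by (simp add: P mult_ac distrib_left)
  qed
qed

lemma beta_closed: "u \<le> p \<Longrightarrow> u \<le> q \<Longrightarrow> k \<le> p + q \<Longrightarrow> beta p q k u = (bcl (p+q) k u :: 'a::field_char_0)"
proof (induction k arbitrary: u)
  case 0
  then show ?case by (simp add: bcl_def)
next
  case (Suc k)
  have IH1: "beta p q k u = (bcl (p+q) k u :: 'a)" using Suc by simp
  have IH2: "u \<noteq> 0 \<Longrightarrow> beta p q k (u-1) = (bcl (p+q) k (u-1) :: 'a)" using Suc by simp
  show ?case
    unfolding bcl_step[OF Suc.prems] beta.simps IH1
    using IH2 by simp
qed

lemma alpha_zero_lt: "2 * u < k \<Longrightarrow> alpha p q D k u = 0"
proof (induction k arbitrary: u)
  case 0 then show ?case by simp
next
  case (Suc k)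
  have a: "u \<noteq> 0 \<Longrightarrow> alpha p q D k (u-1) = 0" using Suc by simp
  have b: "alpha p q D k u = 0 \<or> 2*u - k = 0"
    using Suc by (cases "2*u < k") auto
  show ?case using a b by auto
qed

lemma alpha_zero_gt: "k < u \<Longrightarrow> alpha p q D k u = 0"
  by (induction k arbitrary: u) auto


lemma Tc_0: "Tc 0 = 0" by (simp add: Tc_def bconst_0 ix_0)
lemma Tc_1: "Tc 1 = 1" by (simp add: Tc_def bconst_1 ix_1)

lemma Tc_dist: "Tc x * (Tc y * G1 + Tc z * G2) = Tc (y * x) * G1 + Tc (z * x) * G2"
  by (simp add: Tc_mult algebra_simps)

lemma Om_term:
  fixes lam mu nu :: "'a::field_char_0"
  defines "D \<equiv> - (mu ^ 2 - 4 * lam * nu)"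
  shows "Tc (alpha p q D k u) * Om (G lam mu nu (p-u) (q-u) (2*u-k)) =
     Tc (D * of_nat ((p - u) * (q - u)) * alpha p q D k u) * G lam mu nu (p - Suc u) (q - Suc u) (2 * Suc u - Suc k)
   + Tc (of_nat ((2*u-k)*((2*u-k)+1+2*(p-u)+2*(q-u))) * alpha p q D k u) * G lam mu nu (p-u) (q-u) (2*u - Suc k)"
proof (cases "2 * u < k")
  case True
  then show ?thesis by (simp add: alpha_zero_lt Tc_0)
next
  case False
  have e1: "p - u - 1 = p - Suc u" "q - u - 1 = q - Suc u" "Suc (2*u-k) = 2 * Suc u - Suc k"
     "2*u - k - 1 = 2*u - Suc k" using False by auto
  show ?thesis
    unfolding Om_G e1 D_def[symmetric] by (rule Tc_dist)
qed

lemma Om_power_sum: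
  fixes lam mu nu :: "'a::field_char_0"
  defines "D \<equiv> - (mu ^ 2 - 4 * lam * nu)"
  shows "(Om ^^ k) (G lam mu nu p q 0) = (\<Sum>u\<le>k. Tc (alpha p q D k u) * G lam mu nu (p-u) (q-u) (2*u-k))"
proof (induction k)
  case 0
  then show ?case by (simp add: Tc_1)
next
  case (Suc k)
  define A where "A u = (if u = 0 then 0 else D * of_nat ((p - (u-1)) * (q - (u-1))) * alpha p q D k (u-1))" for u
  define B where "B u = of_nat ((2*u-k)*((2*u-k)+1+2*(p-u)+2*(q-u))) * alpha p q D k u" for u
  have "(Om ^^ Suc k) (G lam mu nu p q 0) = Om ((Om ^^ k) (G lam mu nu p q 0))" by simp
  also have "\<dots> = (\<Sum>u\<le>k. Tc (alpha p q D k u) * Om (G lam mu nu (p-u) (q-u) (2*u-k)))"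
    unfolding Suc.IH Om_sum Om_Tc_mult ..
  also have "\<dots> = (\<Sum>u\<le>k. Tc (A (Suc u)) * G lam mu nu (p - Suc u) (q - Suc u) (2 * Suc u - Suc k))
       + (\<Sum>u\<le>k. Tc (B u) * G lam mu nu (p-u) (q-u) (2*u - Suc k))"
  proof -
    have A_Suc: "A (Suc u) = D * of_nat ((p - u) * (q - u)) * alpha p q D k u" for u by (simp add: A_def)
    show ?thesis
      unfolding sum.distrib[symmetric] by (intro sum.cong refl) (simp only: A_Suc B_def Om_term[where lam=lam and mu=mu and nu=nu, folded D_def])
  qed
  also have "(\<Sum>u\<le>k. Tc (A (Suc u)) * G lam mu nu (p - Suc u) (q - Suc u) (2 * Suc u - Suc k))
      = (\<Sum>u\<le>Suc k. Tc (A u) * G lam mu nu (p - u) (q - u) (2 * u - Suc k))"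
    by (subst sum.atMost_Suc_shift) (simp add: A_def Tc_0)
  also have "(\<Sum>u\<le>k. Tc (B u) * G lam mu nu (p-u) (q-u) (2*u - Suc k))
      = (\<Sum>u\<le>Suc k. Tc (B u) * G lam mu nu (p - u) (q - u) (2 * u - Suc k))"
    by (simp add: B_def alpha_zero_gt Tc_0)
  also have "(\<Sum>u\<le>Suc k. Tc (A u) * G lam mu nu (p - u) (q - u) (2 * u - Suc k))
     + (\<Sum>u\<le>Suc k. Tc (B u) * G lam mu nu (p - u) (q - u) (2 * u - Suc k))
     = (\<Sum>u\<le>Suc k. Tc (alpha p q D (Suc k) u) * G lam mu nu (p - u) (q - u) (2 * u - Suc k))"
    unfolding sum.distrib[symmetric] by (intro sum.cong refl) (simp only: alpha.simps A_def B_def Tc_add distrib_right)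
  finally show ?case .
qed

lemma diag_W: "diag W = 0"
  by (simp add: W_def diag_diff diag_mult diag_ix diag_iy)

lemma diag_G: "diag (G lam mu nu a b c) = (if c = 0 then Qf lam mu nu ^ (a + b) else 0)"
  by (simp add: G_def diag_mult diag_ix diag_iy diag_power diag_W power_add)

lemma diag_Tc: "diag (Tc c) = bconst c" by (simp add: Tc_def diag_ix)


lemma prod_fact: "m \<le> p \<Longrightarrow> (\<Prod>i<m. of_nat (p - i) :: 'a::field_char_0) = fact p / fact (p - m)"
proof (induction m)
  case 0 then show ?case by simp
next
  case (Suc m)
  have e: "p - m = Suc (p - Suc m)" using Suc.prems by simp
  have "(\<Prod>i<Suc m. of_nat (p - i) :: 'a) = fact p / fact (p - m) * of_nat (p - m)"
    using Suc by simp
  also have "\<dots> = fact p / fact (p - Suc m)"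
  proof -
    have f: "fact (p-m) = (of_nat (p-m) :: 'a) * fact (p - Suc m)"
      unfolding e by (rule fact_Suc)
    have nz: "(of_nat (p-m)::'a) \<noteq> 0" using Suc.prems by simp
    show ?thesis unfolding f using nz by simp
  qed
  finally show ?case .
qed

lemma Pf_fact:
  assumes "m \<le> p" "m \<le> q"
  shows "(Pf p q m :: 'a::field_char_0) = (fact p / fact (p-m)) * (fact q / fact (q-m))"
  unfolding Pf_def prod.distrib prod_fact[OF assms(1)] prod_fact[OF assms(2)] ..

theorem mainTheorem10:
  fixes p q k :: nat and lam mu nu :: "'a::field_char_0" and Q :: "'a poly poly"
  assumes hk: "k \<le> 2 * min p q"
    and hQ: "Q = bconst lam * bX0 ^ 2 + bconst mu * bX0 * bX1 + bconst nu * bX1 ^ 2"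
  defines "\<Delta> \<equiv> mu ^ 2 - 4 * lam * nu"
  shows "(odd k \<longrightarrow> transvectant (2 * p) (2 * q) k (Q ^ p) (Q ^ q) = 0)
       \<and> (\<forall>m. k = 2 * m \<longrightarrow>
            transvectant (2 * p) (2 * q) k (Q ^ p) (Q ^ q)
            = Q ^ (p + q - 2 * m) * bconst ((- \<Delta>) ^ m) *
              bconst ((fact p * fact q * fact (2 * m) * fact (p + q - m)
                       * fact (2 * p - 2 * m) * fact (2 * q - 2 * m))
                    / (fact (2 * p) * fact (2 * q) * fact m * fact (p + q - 2 * m)
                       * fact (p - m) * fact (q - m))))"
proof -
  have Qd: "Q = Qf lam mu nu" using hQ by (simp add: Qf_def)
  define D where "D = - (mu ^ 2 - 4 * lam * nu)"
  have DD: "D = - \<Delta>" by (simp add: D_def \<Delta>_def)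
  define pref :: 'a where "pref = fact (2*p-k) * fact (2*q-k) / (fact (2*p) * fact (2*q))"
  have G0: "ix (Q^p) * iy (Q^q) = G lam mu nu p q 0" by (simp add: G_def Qd)
  have T: "transvectant (2*p) (2*q) k (Q^p) (Q^q) = bconst pref *
      (\<Sum>u\<le>k. bconst (alpha p q D k u) * diag (G lam mu nu (p-u) (q-u) (2*u-k)))"
    unfolding transvectant_diag G0 Om_power_sum[where lam=lam and mu=mu and nu=nu, folded D_def]
    by (simp add: diag_sum diag_mult diag_Tc pref_def)
  have hterm: "bconst (alpha p q D k u) * diag (G lam mu nu (p-u) (q-u) (2*u-k))
     = (if u = k - u then bconst (alpha p q D k u) * Q ^ ((p-u)+(q-u)) else 0)" if "u \<le> k" for u
  proof (cases "2*u < k")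
    case True
    then show ?thesis by (simp add: alpha_zero_lt bconst_0)
  next
    case False
    then show ?thesis using that by (auto simp add: diag_G Qd)
  qed
  show ?thesis
  proof (intro conjI impI allI)
    assume ok: "odd k"
    have ne: "u \<noteq> k - u" if "u \<le> k" for u using ok that by presburger
    have "(\<Sum>u\<le>k. bconst (alpha p q D k u) * diag (G lam mu nu (p-u) (q-u) (2*u-k))) = 0"
      by (intro sum.neutral) (simp add: hterm ne)
    then show "transvectant (2*p) (2*q) k (Q^p) (Q^q) = 0" by (simp add: T)
  next
    fix m assume km: "k = 2 * m"
    have mp: "m \<le> p" "m \<le> q" "2*m \<le> p + q" using hk km by auto
    have "(\<Sum>u\<le>k. bconst (alpha p q D k u) * diag (G lam mu nu (p-u) (q-u) (2*u-k)))
        = (\<Sum>u\<le>k. if u = m then bconst (alpha p q D k m) * Q ^ ((p-m)+(q-m)) else 0)"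
    proof (intro sum.cong refl)
      fix u assume "u \<in> {..k}"
      then have uk: "u \<le> k" by simp
      have eq: "(u = k - u) = (u = m)" using km uk by auto
      show "bconst (alpha p q D k u) * diag (G lam mu nu (p-u) (q-u) (2*u-k))
        = (if u = m then bconst (alpha p q D k m) * Q ^ ((p-m)+(q-m)) else 0)"
        unfolding hterm[OF uk] eq by (cases "u = m") simp_all
    qed
    also have "\<dots> = bconst (alpha p q D k m) * Q ^ ((p-m)+(q-m))"
      using km by simp
    finally have S0: "(\<Sum>u\<le>k. bconst (alpha p q D k u) * diag (G lam mu nu (p-u) (q-u) (2*u-k)))
        = bconst (alpha p q D k m) * Q ^ ((p-m)+(q-m))" .
    have pm: "(p-m)+(q-m) = p + q - 2 * m" using mp by simp
    have S: "(\<Sum>u\<le>k. bconst (alpha p q D k u) * diag (G lam mu nu (p-u) (q-u) (2*u-k)))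
        = bconst (alpha p q D k m) * Q ^ (p + q - 2 * m)"
      using S0 unfolding pm .
    have al: "alpha p q D k m = D ^ m * ((fact p / fact (p-m)) * (fact q / fact (q-m))) *
        (fact (2*m) * fact (p+q-m) / (fact m * fact (p+q-2*m)))"
      unfolding alpha_beta beta_closed[OF mp(1) mp(2) mp(3)[folded km]] Pf_fact[OF mp(1) mp(2)]
      by (simp add: bcl_def km)
    have sc: "pref * alpha p q D k m = (- \<Delta>) ^ m *
              ((fact p * fact q * fact (2 * m) * fact (p + q - m)
                       * fact (2 * p - 2 * m) * fact (2 * q - 2 * m))
                    / (fact (2 * p) * fact (2 * q) * fact m * fact (p + q - 2 * m)
                       * fact (p - m) * fact (q - m)))"
      unfolding al unfolding pref_def DD km by (simp add: field_simps)
    show "transvectant (2*p) (2*q) k (Q^p) (Q^q) = Q ^ (p + q - 2 * m) * bconst ((- \<Delta>) ^ m) *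
              bconst ((fact p * fact q * fact (2 * m) * fact (p + q - m)
                       * fact (2 * p - 2 * m) * fact (2 * q - 2 * m))
                    / (fact (2 * p) * fact (2 * q) * fact m * fact (p + q - 2 * m)
                       * fact (p - m) * fact (q - m)))"
    proof -
      have "bconst pref * (bconst (alpha p q D k m) * Q ^ (p + q - 2 * m))
          = Q ^ (p + q - 2 * m) * bconst (pref * alpha p q D k m)"
        by (simp add: bconst_mult mult_ac)
      also have "\<dots> = Q ^ (p + q - 2 * m) * bconst ((- \<Delta>) ^ m) *
              bconst ((fact p * fact q * fact (2 * m) * fact (p + q - m)
                       * fact (2 * p - 2 * m) * fact (2 * q - 2 * m))
                    / (fact (2 * p) * fact (2 * q) * fact m * fact (p + q - 2 * m)
                       * fact (p - m) * fact (q - m)))"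
        unfolding sc by (simp only: bconst_mult mult.assoc)
      finally show ?thesis unfolding T S .
    qed
  qed
qed

end
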